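(* Consider a SOCO problem with norm $\|\cdot\|$, let $\theta\ge1$ and $N(\cdot)=\theta\|\cdot\|$. Then the expected operating cost of RBG($N$) satisfies $\mathbb{E}[OC(RBG(N))]\le OPT_N$.
   Context: The decision space $F\subseteq(\mathbb{R}^+)^n$ is convex and compact, $\|\cdot\|$ is a norm on $\mathbb{R}^n$, and the cost functions $c^t:F\to\mathbb{R}^+$ are convex with uniformly bounded subgradients. Algorithm RBG($N$): define $w^0(x)=N(x)$ and $w^t(x)=\min_{y\in F}\{w^{t-1}(y)+c^t(y)+N(x-y)\}$; draw $r$ uniformly at random from $(-1,1)$ once; at each time $t$ choose $x^t\in F$ minimizing $Y^t(x)=w^{t-1}(x)+rN(x)$ (so $x^{t+1}$ is chosen after seeing $c^t$). Operating cost: $OC(RBG(N))=\sum_{t=1}^Tc^t(x^{t+1})$. $OPT_N=\min_{(x^1,\dots,x^T)\in F^T}\sum_{t=1}^Tc^t(x^t)+N(x^t-x^{t-1})$ with $x^0=0$. The expectation is over $r$. *)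

theory Defs
  imports "HOL-Analysis.Analysis"
begin

definition is_norm :: "('a::real_vector \<Rightarrow> real) \<Rightarrow> bool" where
  "is_norm nrm \<longleftrightarrow>
     (\<forall>x. 0 \<le> nrm x) \<and> (\<forall>x. nrm x = 0 \<longleftrightarrow> x = 0) \<and>
     (\<forall>a x. nrm (a *\<^sub>R x) = \<bar>a\<bar> * nrm x) \<and>
     (\<forall>x y. nrm (x + y) \<le> nrm x + nrm y)"

definition is_subgradient :: "('a::real_inner \<Rightarrow> real) \<Rightarrow> 'a \<Rightarrow> 'a \<Rightarrow> bool" where
  "is_subgradient f x g \<longleftrightarrow> (\<forall>y. f x + inner g (y - x) \<le> f y)"

fun rbg_w :: "('a::real_vector \<Rightarrow> real) \<Rightarrow> (nat \<Rightarrow> 'a \<Rightarrow> real) \<Rightarrow> 'a set \<Rightarrow> nat \<Rightarrow> 'a \<Rightarrow> real" where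
  "rbg_w N c F 0 x = N x"
| "rbg_w N c F (Suc t) x = (INF y\<in>F. rbg_w N c F t y + c (Suc t) y + N (x - y))"

definition rbg_choice :: "('a::real_vector \<Rightarrow> real) \<Rightarrow> (nat \<Rightarrow> 'a \<Rightarrow> real) \<Rightarrow> 'a set \<Rightarrow> real \<Rightarrow> nat \<Rightarrow> 'a \<Rightarrow> bool" where
  "rbg_choice N c F r t x \<longleftrightarrow> x \<in> F \<and>
     (\<forall>y\<in>F. rbg_w N c F (t - 1) x + r * N x \<le> rbg_w N c F (t - 1) y + r * N y)"

definition opt_N :: "('a::real_vector \<Rightarrow> real) \<Rightarrow> (nat \<Rightarrow> 'a \<Rightarrow> real) \<Rightarrow> 'a set \<Rightarrow> nat \<Rightarrow> real" where
  "opt_N N c F T = Inf {(\<Sum>t\<in>{1..T}. c t (x t) + N (x t - x (t - 1))) | x.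
                         x 0 = 0 \<and> (\<forall>t\<in>{1..T}. x t \<in> F)}"

end

theory Submission
  imports Defs
begin


lemma nrm_basic:
  assumes "is_norm nrm"
  shows "nrm 0 = 0" "nrm (-x) = nrm x" "nrm (x - y) = nrm (y - x)"
    "nrm x \<le> nrm y + nrm (x - y)" "0 \<le> nrm x"
proof -
  have h: "\<And>a x. nrm (a *\<^sub>R x) = \<bar>a\<bar> * nrm x" using assms unfolding is_norm_def by blast
  show "nrm 0 = 0" using assms unfolding is_norm_def by blast
  show n: "nrm (-x) = nrm x" using h[of "-1" x] by simp
  show "nrm (x - y) = nrm (y - x)" using h[of "-1" "x - y"] by simp
  show "nrm x \<le> nrm y + nrm (x - y)" using assms unfolding is_norm_def
    by (metis add.commute diff_add_cancel)
  show "0 \<le> nrm x" using assms unfolding is_norm_def by blast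
qed

lemma nrm_sum:
  assumes "is_norm nrm" "finite A"
  shows "nrm (sum f A) \<le> (\<Sum>i\<in>A. nrm (f i))"
  using assms(2)
proof (induction A rule: finite_induct)
  case empty then show ?case using nrm_basic[OF assms(1)] by simp
next
  case (insert a A)
  have "nrm (f a + sum f A) \<le> nrm (f a) + nrm (sum f A)" using assms(1) unfolding is_norm_def by blast
  then show ?case using insert by simp
qed

lemma nrm_upper:
  fixes nrm :: "real ^ 'n \<Rightarrow> real"
  assumes "is_norm nrm"
  shows "\<exists>C\<ge>0. \<forall>v. nrm v \<le> C * norm v"
proof -
  define C where "C = (\<Sum>i\<in>UNIV. nrm (axis i (1::real) :: real ^ 'n))"
  have C0: "C \<ge> 0" unfolding C_def using nrm_basic(5)[OF assms] by (simp add: sum_nonneg)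
  have "nrm v \<le> C * norm v" for v
  proof -
    have "nrm v = nrm (\<Sum>i\<in>UNIV. v $ i *\<^sub>R axis i 1)"
      using basis_expansion[of v] by (simp add: scalar_mult_eq_scaleR)
    also have "\<dots> \<le> (\<Sum>i\<in>UNIV. nrm (v $ i *\<^sub>R axis i 1))" by (rule nrm_sum[OF assms]) simp
    also have "\<dots> = (\<Sum>i\<in>UNIV. \<bar>v $ i\<bar> * nrm (axis i 1))"
      using assms unfolding is_norm_def by simp
    also have "\<dots> \<le> (\<Sum>i\<in>UNIV. norm v * nrm (axis i 1))"
      by (intro sum_mono mult_right_mono component_le_norm_cart nrm_basic(5)[OF assms])
    also have "\<dots> = C * norm v" unfolding C_def by (simp add: sum_distrib_left mult.commute)
    finally show ?thesis .
  qed
  then show ?thesis using C0 by blast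
qed

lemma nrm_lower:
  fixes nrm :: "real ^ 'n \<Rightarrow> real"
  assumes "is_norm nrm"
  shows "\<exists>K>0. \<forall>v. norm v \<le> K * nrm v"
proof -
  obtain C where C: "C \<ge> 0" "\<And>v. nrm v \<le> C * norm v" using nrm_upper[OF assms] by blast
  have cont: "continuous_on (sphere 0 1) nrm"
    unfolding continuous_on_iff
  proof (intro ballI allI impI)
    fix x e assume "x \<in> sphere (0::real^'n) 1" "(0::real) < e"
    show "\<exists>d>0. \<forall>x'\<in>sphere 0 1. dist x' x < d \<longrightarrow> dist (nrm x') (nrm x) < e"
    proof (intro exI[of _ "e / (C + 1)"] conjI ballI impI)
      show "0 < e / (C + 1)" using \<open>0 < e\<close> C by simp
      fix x' assume "dist x' x < e / (C + 1)"
      have "\<bar>nrm x' - nrm x\<bar> \<le> nrm (x' - x)"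
        using nrm_basic(4)[OF assms, of x' x] nrm_basic(4)[OF assms, of x x'] nrm_basic(3)[OF assms, of x' x]
        by linarith
      also have "\<dots> \<le> C * norm (x' - x)" by (rule C)
      also have "\<dots> \<le> (C + 1) * norm (x' - x)" by (simp add: mult_right_mono)
      also have "\<dots> < e" using \<open>dist x' x < e / (C + 1)\<close> C by (simp add: dist_norm field_simps)
      finally show "dist (nrm x') (nrm x) < e" by (simp add: dist_real_def)
    qed
  qed
  have ne: "sphere (0::real^'n) 1 \<noteq> {}"
    using norm_axis_1 by (metis mem_sphere_0 empty_iff)
  obtain u where u: "u \<in> sphere 0 1" "\<And>y. y \<in> sphere 0 1 \<Longrightarrow> nrm u \<le> nrm y"
    using continuous_attains_inf[OF compact_sphere ne cont] by blast
  have up: "nrm u > 0" using u(1) assms unfolding is_norm_def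
    by (metis less_eq_real_def norm_zero mem_sphere_0 zero_neq_one)
  have "norm v \<le> (1 / nrm u) * nrm v" for v
  proof (cases "v = 0")
    case True then show ?thesis using nrm_basic[OF assms] by simp
  next
    case False
    then have "(1 / norm v) *\<^sub>R v \<in> sphere 0 1" by simp
    then have "nrm u \<le> nrm ((1 / norm v) *\<^sub>R v)" by (rule u(2))
    also have "\<dots> = nrm v / norm v" using assms unfolding is_norm_def by simp
    finally show ?thesis using up False by (simp add: field_simps)
  qed
  then show ?thesis using up by (intro exI[of _ "1 / nrm u"]) auto
qed



context
  fixes nrm :: "real ^ 'n \<Rightarrow> real" and \<theta> :: real and c :: "nat \<Rightarrow> real ^ 'n \<Rightarrow> real"
    and F :: "(real ^ 'n) set" and T :: nat
  assumes nrm: "is_norm nrm" and th: "1 \<le> \<theta>" and Fne: "F \<noteq> {}"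
    and cnn: "\<forall>t\<in>{1..T}. \<forall>x\<in>F. 0 \<le> c t x"
begin

abbreviation "W \<equiv> rbg_w (\<lambda>x. \<theta> * nrm x) c F"

lemma NN_basic: "\<theta> * nrm 0 = 0" "\<theta> * nrm x \<le> \<theta> * nrm y + \<theta> * nrm (x - y)" "0 \<le> \<theta> * nrm x" "\<theta> * nrm (x - y) = \<theta> * nrm (y - x)"
proof -
  show "\<theta> * nrm 0 = 0" using nrm_basic(1)[OF nrm] by simp
  have "\<theta> * nrm x \<le> \<theta> * (nrm y + nrm (x - y))"
    using nrm_basic(4)[OF nrm, of x y] th by (intro mult_left_mono) auto
  then show "\<theta> * nrm x \<le> \<theta> * nrm y + \<theta> * nrm (x - y)" by (simp add: distrib_left)
  show "0 \<le> \<theta> * nrm x" using nrm_basic(5)[OF nrm, of x] th by simp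
  show "\<theta> * nrm (x - y) = \<theta> * nrm (y - x)" using nrm_basic(3)[OF nrm, of x y] by simp
qed

lemma W_nonneg: "t \<le> T \<Longrightarrow> 0 \<le> W t x"
proof (induction t arbitrary: x)
  case 0 then show ?case using NN_basic by simp
next
  case (Suc t)
  show ?case unfolding rbg_w.simps
    using Suc cnn Fne NN_basic(3) by (intro cINF_greatest) (auto intro!: add_nonneg_nonneg)
qed

lemma bdd: "Suc t \<le> T \<Longrightarrow> bdd_below ((\<lambda>y. W t y + c (Suc t) y + \<theta> * nrm (x - y)) ` F)"
  using W_nonneg cnn NN_basic(3)
  by (intro bdd_belowI[of _ 0]) (auto intro!: add_nonneg_nonneg)

lemma W_le: "Suc t \<le> T \<Longrightarrow> y \<in> F \<Longrightarrow> W (Suc t) x \<le> W t y + c (Suc t) y + \<theta> * nrm (x - y)"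
  unfolding rbg_w.simps by (rule cINF_lower[OF bdd]) auto

lemma W_ge: "Suc t \<le> T \<Longrightarrow> (\<And>y. y \<in> F \<Longrightarrow> a \<le> W t y + c (Suc t) y + \<theta> * nrm (x - y)) \<Longrightarrow> a \<le> W (Suc t) x"
  unfolding rbg_w.simps using Fne by (intro cINF_greatest) auto

lemma W_approx: "Suc t \<le> T \<Longrightarrow> 0 < e \<Longrightarrow> \<exists>y\<in>F. W t y + c (Suc t) y + \<theta> * nrm (x - y) < W (Suc t) x + e"
proof -
  assume a: "Suc t \<le> T" "0 < e"
  have "W (Suc t) x < W (Suc t) x + e" using a by simp
  then show ?thesis unfolding rbg_w.simps using cINF_less_iff[OF Fne bdd[OF a(1)]] by blast
qed

lemma W_lip: "t \<le> T \<Longrightarrow> W t x \<le> W t z + \<theta> * nrm (x - z)"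
proof (cases t)
  case 0 then show ?thesis using NN_basic(2) by simp
next
  case (Suc s)
  assume "t \<le> T"
  show ?thesis
  proof -
    have "W t x - \<theta> * nrm (x - z) \<le> W t z"
      unfolding Suc
    proof (rule W_ge)
      show "Suc s \<le> T" using Suc \<open>t \<le> T\<close> by simp
      fix y assume y: "y \<in> F"
      have "W (Suc s) x \<le> W s y + c (Suc s) y + \<theta> * nrm (x - y)" using W_le Suc \<open>t \<le> T\<close> y by simp
      moreover have "\<theta> * nrm (x - y) \<le> \<theta> * nrm (z - y) + \<theta> * nrm (x - z)" using NN_basic(2)[of "x - y" "z - y"] by simp
      ultimately show "W (Suc s) x - \<theta> * nrm (x - z) \<le> W s y + c (Suc s) y + \<theta> * nrm (z - y)" by linarith
    qed
    then show ?thesis by simp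
  qed
qed

lemma W_traj:
  assumes "y 0 = 0" "\<forall>s\<in>{1..T}. y s \<in> F"
  shows "t \<le> T \<Longrightarrow> W t (y t) \<le> (\<Sum>s\<in>{1..t}. c s (y s) + \<theta> * nrm (y s - y (s - 1)))"
proof (induction t)
  case 0 then show ?case using assms nrm_basic(1)[OF nrm] by simp
next
  case (Suc t)
  have h1: "W (Suc t) (y (Suc t)) \<le> W t (y (Suc t)) + c (Suc t) (y (Suc t)) + \<theta> * nrm (y (Suc t) - y (Suc t))"
    using W_le[OF Suc.prems, where x="y (Suc t)" and y="y (Suc t)"] assms Suc.prems by auto
  have z: "\<theta> * nrm (y (Suc t) - y (Suc t)) = 0" by (simp add: nrm_basic(1)[OF nrm])
  have h2: "W t (y (Suc t)) \<le> W t (y t) + \<theta> * nrm (y (Suc t) - y t)"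
    using W_lip[of t "y (Suc t)" "y t"] Suc.prems by simp
  have h3: "W t (y t) \<le> (\<Sum>s\<in>{1..t}. c s (y s) + \<theta> * nrm (y s - y (s - 1)))"
    using Suc by simp
  have "(\<Sum>s\<in>{1..Suc t}. c s (y s) + \<theta> * nrm (y s - y (s - 1))) = (\<Sum>s\<in>{1..t}. c s (y s) + \<theta> * nrm (y s - y (s - 1))) + (c (Suc t) (y (Suc t)) + \<theta> * nrm (y (Suc t) - y t))"
    by simp
  then show ?case using h1 z h2 h3 by linarith
qed

lemma main_step:
  assumes t: "Suc s \<le> T" and r: "\<bar>r\<bar> < 1"
    and cc: "continuous_on UNIV (c (Suc s))"
    and x: "x \<in> F" and xmin: "\<forall>y\<in>F. W s x + r * \<theta> * nrm x \<le> W s y + r * \<theta> * nrm y"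
    and x': "x' \<in> F" and x'min: "\<forall>y\<in>F. W (Suc s) x' + r * \<theta> * nrm x' \<le> W (Suc s) y + r * \<theta> * nrm y"
  shows "W s x + r * \<theta> * nrm x + c (Suc s) x' \<le> W (Suc s) x' + r * \<theta> * nrm x'"
proof (rule field_le_epsilon)
  fix e :: real assume e: "0 < e"
  obtain K where K: "K > 0" "\<And>v. norm v \<le> K * nrm v" using nrm_lower[OF nrm] by blast
  have "isCont (c (Suc s)) x'" using cc by (simp add: continuous_on_eq_continuous_at)
  then obtain d where d: "d > 0" "\<And>y. dist y x' < d \<Longrightarrow> dist (c (Suc s) y) (c (Suc s) x') < e / 2"
    using e unfolding continuous_at_eps_delta by (meson half_gt_zero)
  define eps where "eps = min (e / 2) (d * (1 - \<bar>r\<bar>) / (2 * K))"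
  have eps: "eps > 0" using e d K r by (simp add: eps_def)
  obtain y where y: "y \<in> F" "W s y + c (Suc s) y + \<theta> * nrm (x' - y) < W (Suc s) x' + eps"
    using W_approx[OF t eps] by blast
  have A0: "W (Suc s) y \<le> W s y + c (Suc s) y + \<theta> * nrm (y - y)" using W_le[OF t y(1)] .
  have z: "\<theta> * nrm (y - y) = 0" by (simp add: nrm_basic(1)[OF nrm])
  have A: "W (Suc s) x' + r * \<theta> * nrm x' \<le> W s y + c (Suc s) y + r * \<theta> * nrm y"
    using x'min y(1) A0 z by fastforce
  have Nd: "\<bar>\<theta> * nrm y - \<theta> * nrm x'\<bar> \<le> \<theta> * nrm (x' - y)"
    using NN_basic(2)[of y x'] NN_basic(2)[of x' y] NN_basic(4)[of x' y] by linarith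
  have "\<bar>r * \<theta> * nrm y - r * \<theta> * nrm x'\<bar> = \<bar>r\<bar> * \<bar>\<theta> * nrm y - \<theta> * nrm x'\<bar>"
    by (simp add: abs_mult[symmetric] right_diff_distrib)
  also have "\<dots> \<le> \<bar>r\<bar> * \<theta> * nrm (x' - y)" using mult_left_mono[OF Nd, of "\<bar>r\<bar>"] by (simp add: mult.assoc)
  finally have C: "r * \<theta> * nrm y \<le> r * \<theta> * nrm x' + \<bar>r\<bar> * \<theta> * nrm (x' - y)" by linarith
  have "(1 - \<bar>r\<bar>) * \<theta> * nrm (x' - y) < eps" using A y(2) C by (simp add: algebra_simps)
  have "(1 - \<bar>r\<bar>) * nrm (x' - y) \<le> (1 - \<bar>r\<bar>) * \<theta> * nrm (x' - y)"
    using th r nrm_basic(5)[OF nrm, of "x' - y"] by (simp add: mult_right_mono)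
  have n1: "(1 - \<bar>r\<bar>) * nrm (x' - y) < eps"
    using \<open>(1 - \<bar>r\<bar>) * \<theta> * nrm (x' - y) < eps\<close> \<open>(1 - \<bar>r\<bar>) * nrm (x' - y) \<le> _\<close> by linarith
  have "(1 - \<bar>r\<bar>) * norm (x' - y) \<le> (1 - \<bar>r\<bar>) * (K * nrm (x' - y))"
    using K(2) r by (intro mult_left_mono) auto
  also have "\<dots> = K * ((1 - \<bar>r\<bar>) * nrm (x' - y))" by simp
  also have "\<dots> \<le> K * eps" using n1 K by simp
  also have "\<dots> \<le> K * (d * (1 - \<bar>r\<bar>) / (2 * K))" using K by (intro mult_left_mono) (auto simp: eps_def)
  also have "\<dots> = (1 - \<bar>r\<bar>) * (d / 2)" using K by (simp add: field_simps)
  finally have "norm (x' - y) \<le> d / 2" using r by simp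
  then have "dist y x' < d" using d by (simp add: dist_norm norm_minus_commute)
  then have "dist (c (Suc s) y) (c (Suc s) x') < e / 2" by (rule d(2))
  then have D: "c (Suc s) x' < c (Suc s) y + e / 2" unfolding dist_real_def by linarith
  have E: "W s x + r * \<theta> * nrm x \<le> W s y + r * \<theta> * nrm y" using xmin y(1) by blast
  have F: "\<theta> * nrm (x' - y) \<ge> \<bar>r\<bar> * \<theta> * nrm (x' - y)"
    using r NN_basic(3)[of "x' - y"] mult_left_le_one_le[of "\<theta> * nrm (x' - y)" "\<bar>r\<bar>"] by (simp add: mult.assoc)
  have "eps \<le> e / 2" by (simp add: eps_def)
  show "W s x + r * \<theta> * nrm x + c (Suc s) x' \<le> W (Suc s) x' + r * \<theta> * nrm x' + e"
    using y(2) C D E F \<open>eps \<le> e / 2\<close> by linarith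
qed

end


lemma unif_eq: "uniform_measure lborel {-1<..<(1::real)} = density lborel (\<lambda>x. ennreal (indicator {-1<..<1} x / 2))"
  unfolding uniform_measure_def
  by (intro arg_cong[where f="density lborel"] ext) (simp split: split_indicator add: divide_ennreal divide_ennreal_def)

lemma ae_ind: "AE x in lborel. indicator {-1<..<(1::real)} x = (indicator {-1..1} x :: real)"
  using AE_lborel_singleton[of "1::real"] AE_lborel_singleton[of "-1::real"]
  by eventually_elim (auto split: split_indicator)

lemma affine_unif:
  fixes a b :: real
  shows "integrable (uniform_measure lborel {-1<..<(1::real)}) (\<lambda>r. a + r * b)"
    "integral\<^sup>L (uniform_measure lborel {-1<..<(1::real)}) (\<lambda>r. a + r * b) = a"
proof -
  let ?g = "\<lambda>x::real. indicator {-1<..<1} x / 2 :: real"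
  have eq: "\<And>x. ?g x *\<^sub>R (a + x * b) = (a / 2) * (1 * indicator {-1..1} x) + (b / 2) * (x ^ 1 * indicator {-1..1} x)
     \<or> True" by simp
  have ae: "AE x in lborel. ?g x *\<^sub>R (a + x * b) = (a / 2) * (1 * indicator {-1..1} x) + (b / 2) * (x ^ 1 * indicator {-1..1} x)"
    using ae_ind by eventually_elim (simp add: algebra_simps)
  have i1: "integrable lborel (\<lambda>x::real. 1 * indicator {-1..1} x :: real)"
    by (rule borel_integrable_atLeastAtMost) auto
  have i2: "integrable lborel (\<lambda>x::real. x ^ 1 * indicator {-1..1} x :: real)"
    by (rule borel_integrable_atLeastAtMost) auto
  have iR: "integrable lborel (\<lambda>x. (a / 2) * (1 * indicator {-1..1} x) + (b / 2) * (x ^ 1 * indicator {-1..1} x))"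
    using i1 i2 by auto
  have int1: "(\<integral>x. 1 * indicator {-1..1::real} x \<partial>lborel) = (2::real)"
    by (simp add: content_real)
  have int2: "(\<integral>x. x ^ 1 * indicator {-1..1::real} x \<partial>lborel) = (0::real)"
    using integral_power[of "-1::real" 1 1] by simp
  have "integrable lborel (\<lambda>x. ?g x *\<^sub>R (a + x * b))"
    using iR ae by (subst integrable_cong_AE) auto
  then show "integrable (uniform_measure lborel {-1<..<(1::real)}) (\<lambda>r. a + r * b)"
    unfolding unif_eq by (subst integrable_density) auto
  have "integral\<^sup>L (uniform_measure lborel {-1<..<(1::real)}) (\<lambda>r. a + r * b)
      = (\<integral>x. ?g x *\<^sub>R (a + x * b) \<partial>lborel)"
    unfolding unif_eq by (subst integral_density) auto
  also have "\<dots> = (\<integral>x. (a / 2) * (1 * indicator {-1..1} x) + (b / 2) * (x ^ 1 * indicator {-1..1} x) \<partial>lborel)"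
    using ae by (intro integral_cong_AE) auto
  also have "\<dots> = a" using i1 i2 int1 int2 by simp
  finally show "integral\<^sup>L (uniform_measure lborel {-1<..<(1::real)}) (\<lambda>r. a + r * b) = a" .
qed



theorem lemma4:
  fixes F :: "(real ^ 'n) set"
    and nrm :: "real ^ 'n \<Rightarrow> real"
    and c :: "nat \<Rightarrow> real ^ 'n \<Rightarrow> real"
    and T :: nat
    and \<theta> :: real
    and X :: "nat \<Rightarrow> real \<Rightarrow> real ^ 'n"
  assumes F_convex: "convex F"
    and F_compact: "compact F"
    and F_nonneg: "\<forall>x\<in>F. \<forall>i. 0 \<le> x $ i"
    and norm: "is_norm nrm"
    and c_convex: "\<forall>t\<in>{1..T}. convex_on UNIV (c t)"
    and c_nonneg: "\<forall>t\<in>{1..T}. \<forall>x\<in>F. 0 \<le> c t x"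
    and c_subgrad_bounded:
      "\<exists>G. \<forall>t\<in>{1..T}. \<forall>x g. is_subgradient (c t) x g \<longrightarrow> norm g \<le> G"
    and theta: "1 \<le> \<theta>"
    and X_choice: "\<forall>r\<in>{-1<..<1}. \<forall>t\<ge>1.
                     rbg_choice (\<lambda>x. \<theta> * nrm x) c F r t (X t r)"
    and X_meas: "\<forall>t. X t \<in> borel_measurable (restrict_space borel {-1<..<(1::real)})"
  shows "integral\<^sup>L (uniform_measure lborel {-1<..<(1::real)})
            (\<lambda>r. \<Sum>t\<in>{1..T}. c t (X (t + 1) r))
         \<le> opt_N (\<lambda>x. \<theta> * nrm x) c F T"
proof -
  let ?W = "rbg_w (\<lambda>x. \<theta> * nrm x) c F"
  let ?\<mu> = "uniform_measure lborel {-1<..<(1::real)}"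
  let ?S = "\<lambda>r. \<Sum>t\<in>{1..T}. c t (X (t + 1) r)"
  define cost where "cost y = (\<Sum>t\<in>{1..T}. c t (y t) + \<theta> * nrm (y t - y (t - 1)))" for y
  have Fne: "F \<noteq> {}" using X_choice unfolding rbg_choice_def
    by (metis empty_iff greaterThanLessThan_iff le_refl neg_less_0_iff_less zero_less_one)
  have cc: "\<forall>t\<in>{1..T}. continuous_on UNIV (c t)"
    using c_convex convex_on_continuous[OF open_UNIV] by blast
  have ch: "\<And>k r. r \<in> {-1<..<1} \<Longrightarrow> k \<ge> 1 \<Longrightarrow> X k r \<in> F \<and>
      (\<forall>z\<in>F. ?W (k-1) (X k r) + r * \<theta> * nrm (X k r) \<le> ?W (k-1) z + r * \<theta> * nrm z)"
    using X_choice unfolding rbg_choice_def by (simp add: mult.assoc)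
  have pw: "?S r \<le> cost y + r * (\<theta> * nrm (y T))"
    if r: "r \<in> {-1<..<1}" and y: "y 0 = 0" "\<forall>t\<in>{1..T}. y t \<in> F" for r y
  proof -
    define m where "m k = ?W (k - 1) (X k r) + r * \<theta> * nrm (X k r)" for k
    have ra: "\<bar>r\<bar> < 1" using r by auto
    have tel: "k \<le> T \<Longrightarrow> m 1 + (\<Sum>t\<in>{1..k}. c t (X (t+1) r)) \<le> m (k+1)" for k
    proof (induction k)
      case 0 show ?case by simp
    next
      case (Suc k)
      have "?W k (X (Suc k) r) + r * \<theta> * nrm (X (Suc k) r) + c (Suc k) (X (Suc (Suc k)) r)
          \<le> ?W (Suc k) (X (Suc (Suc k)) r) + r * \<theta> * nrm (X (Suc (Suc k)) r)"
        apply (rule main_step[OF norm theta Fne c_nonneg Suc.prems ra])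
        using r cc Suc.prems ch[of r "Suc k"] ch[of r "Suc (Suc k)"] by auto
      then have "m (Suc k) + c (Suc k) (X (Suc k + 1) r) \<le> m (Suc k + 1)"
        unfolding m_def by simp
      then show ?case using Suc by simp
    qed
    have m1: "m 1 \<ge> 0"
    proof -
      have "m 1 = (1 + r) * (\<theta> * nrm (X 1 r))" unfolding m_def by (simp add: algebra_simps)
      moreover have "0 \<le> \<theta> * nrm (X 1 r)" using theta nrm_basic(5)[OF norm] by simp
      ultimately show ?thesis using ra by simp
    qed
    show ?thesis
    proof (cases "T = 0")
      case True then show ?thesis using y nrm_basic(1)[OF norm] by (simp add: cost_def)
    next
      case False
      have "m (T + 1) \<le> ?W T (y T) + r * \<theta> * nrm (y T)"
        using ch[OF r, of "T + 1"] y False unfolding m_def by auto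
      also have "?W T (y T) \<le> cost y"
        using W_traj[OF norm theta Fne c_nonneg y] unfolding cost_def by simp
      finally show ?thesis using tel[of T] m1 by (simp add: mult.assoc)
    qed
  qed
  have cost_nn: "0 \<le> cost y" if y: "y 0 = 0" "\<forall>t\<in>{1..T}. y t \<in> F" for y
    unfolding cost_def using c_nonneg y nrm_basic(5)[OF norm] theta
    by (intro sum_nonneg add_nonneg_nonneg) auto
  have bound: "integral\<^sup>L ?\<mu> ?S \<le> cost y" if y: "y 0 = 0" "\<forall>t\<in>{1..T}. y t \<in> F" for y
  proof (cases "integrable ?\<mu> ?S")
    case True
    have "integral\<^sup>L ?\<mu> ?S \<le> integral\<^sup>L ?\<mu> (\<lambda>r. cost y + r * (\<theta> * nrm (y T)))"
    proof (rule integral_mono_AE[OF True affine_unif(1)])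
      show "AE r in ?\<mu>. ?S r \<le> cost y + r * (\<theta> * nrm (y T))"
        apply (rule AE_uniform_measureI)
         apply simp
        apply (rule AE_I2)
        using pw[OF _ y] by blast
    qed
    also have "\<dots> = cost y" by (rule affine_unif(2))
    finally show ?thesis .
  next
    case False
    then show ?thesis using cost_nn[OF y] by (simp add: not_integrable_integral_eq)
  qed
  obtain f where f: "f \<in> F" using Fne by blast
  let ?y0 = "\<lambda>t::nat. if t = 0 then 0 else f"
  have ne: "{cost y | y. y 0 = 0 \<and> (\<forall>t\<in>{1..T}. y t \<in> F)} \<noteq> {}"
  proof -
    have "cost ?y0 \<in> {cost y | y. y 0 = 0 \<and> (\<forall>t\<in>{1..T}. y t \<in> F)}" using f by auto
    then show ?thesis by blast
  qed
  show ?thesis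
    unfolding opt_N_def cost_def[symmetric]
    using ne bound by (intro cInf_greatest) auto
qed


end
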